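(* Let $n>1$, $m\ge1$ and let $v\in Z_{n,m}$ with $\operatorname{Piv}(v)=\{-1,m+1\}$. Then $\operatorname{ps}_{m+1}(v)=\sum_{i=0}^{m+1}i\,v_i$, $\operatorname{ps}_{-1}(v)=\sum_{i=0}^{m+1}(m+1-i)v_i$, and $d(v,0)\leq\lfloor\frac{n(m+1)}{2}\rfloor$.
   Context: Elements of $\mathbb{Z}_n$ are identified with representatives in $\{0,\dots,n-1\}$ (so $v_0,v_{m+1}$ are such integers in sums). $Z_{n,m}$ has vertices $u=(u_0,\dots,u_{m+1})\in\mathbb{Z}_n\times\{-1,0,1\}^m\times\mathbb{Z}_n$ with $\sum u_i\equiv0\pmod n$. A step from $v$ to $u$ is a left shift at $i$ ($0\le i\le m$) if $u_j=v_j$ for $j\notin\{i,i+1\}$, $u_i=v_i+1$, $u_{i+1}=v_{i+1}-1$, and a right shift at $i$ if $u_i=v_i-1$, $u_{i+1}=v_{i+1}+1$ (arithmetic in coordinates $0,m+1$ in $\mathbb{Z}_n$); vertices are adjacent iff related by such a shift. $d$ is graph distance, $0$ the all-zero vertex. $\operatorname{Piv}(v)$ is the set of integers $-1\le p\le m+1$ with $n\mid\sum_{i=0}^p v_i$ (empty sum $=0$). For a path $P$ from $v$ to $0$: $0\le p\le m$ is a wall if no step is a shift at $p$; $-1$ is a wall if no step is a left shift at $0$; $m+1$ is a wall if no step is a right shift at $m$. $\operatorname{ps}_p(v)$ is the minimum length of a path from $v$ to $0$ having $p$ as a wall. *)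

theory Defs
  imports Main "HOL-Library.Extended_Real"
begin

(* Vertices of Z_{n,m}: functions nat => int, coordinates 0..m+1, zero beyond m+1.
   Coordinates 0 and m+1 are representatives in {0..n-1}. *)
definition Zv :: "nat \<Rightarrow> nat \<Rightarrow> (nat \<Rightarrow> int) set" where
  "Zv n m = {v. v 0 \<in> {0..<int n} \<and> v (m+1) \<in> {0..<int n}
     \<and> (\<forall>i\<in>{1..m}. v i \<in> {-1,0,1}) \<and> (\<forall>i>m+1. v i = 0)
     \<and> int n dvd (\<Sum>i\<le>m+1. v i)}"

definition zerov :: "nat \<Rightarrow> int" where "zerov = (\<lambda>_. 0)"

definition cadd :: "nat \<Rightarrow> nat \<Rightarrow> nat \<Rightarrow> int \<Rightarrow> int" where
  "cadd n m j x = (if j = 0 \<or> j = m+1 then x mod int n else x)"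

definition left_shift :: "nat \<Rightarrow> nat \<Rightarrow> nat \<Rightarrow> (nat \<Rightarrow> int) \<Rightarrow> (nat \<Rightarrow> int) \<Rightarrow> bool" where
  "left_shift n m i v u \<longleftrightarrow> i \<le> m \<and> (\<forall>j. j \<noteq> i \<and> j \<noteq> i+1 \<longrightarrow> u j = v j)
     \<and> u i = cadd n m i (v i + 1) \<and> u (i+1) = cadd n m (i+1) (v (i+1) - 1)"

definition right_shift :: "nat \<Rightarrow> nat \<Rightarrow> nat \<Rightarrow> (nat \<Rightarrow> int) \<Rightarrow> (nat \<Rightarrow> int) \<Rightarrow> bool" where
  "right_shift n m i v u \<longleftrightarrow> i \<le> m \<and> (\<forall>j. j \<noteq> i \<and> j \<noteq> i+1 \<longrightarrow> u j = v j)
     \<and> u i = cadd n m i (v i - 1) \<and> u (i+1) = cadd n m (i+1) (v (i+1) + 1)"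

definition adj :: "nat \<Rightarrow> nat \<Rightarrow> (nat \<Rightarrow> int) \<Rightarrow> (nat \<Rightarrow> int) \<Rightarrow> bool" where
  "adj n m v u \<longleftrightarrow> v \<in> Zv n m \<and> u \<in> Zv n m \<and>
     (\<exists>i\<le>m. left_shift n m i v u \<or> right_shift n m i v u)"

definition is_path :: "nat \<Rightarrow> nat \<Rightarrow> (nat \<Rightarrow> int) \<Rightarrow> (nat \<Rightarrow> int) \<Rightarrow> (nat \<Rightarrow> int) list \<Rightarrow> bool" where
  "is_path n m v u xs \<longleftrightarrow> xs \<noteq> [] \<and> hd xs = v \<and> last xs = u \<and> set xs \<subseteq> Zv n m
     \<and> (\<forall>k < length xs - 1. adj n m (xs ! k) (xs ! Suc k))"

definition gdist :: "nat \<Rightarrow> nat \<Rightarrow> (nat \<Rightarrow> int) \<Rightarrow> (nat \<Rightarrow> int) \<Rightarrow> enat" where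
  "gdist n m v u = (INF xs \<in> {xs. is_path n m v u xs}. enat (length xs - 1))"

definition is_wall :: "nat \<Rightarrow> nat \<Rightarrow> int \<Rightarrow> (nat \<Rightarrow> int) list \<Rightarrow> bool" where
  "is_wall n m p xs \<longleftrightarrow>
     (if p = -1 then (\<forall>k < length xs - 1. \<not> left_shift n m 0 (xs ! k) (xs ! Suc k))
      else if p = int m + 1 then (\<forall>k < length xs - 1. \<not> right_shift n m m (xs ! k) (xs ! Suc k))
      else if 0 \<le> p \<and> p \<le> int m then
        (\<forall>k < length xs - 1. \<not> left_shift n m (nat p) (xs ! k) (xs ! Suc k)
                              \<and> \<not> right_shift n m (nat p) (xs ! k) (xs ! Suc k))
      else False)"

(* ps_p(v): minimal length of a path from v to 0 having p as a wall (infinity if none) *)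
definition ps :: "nat \<Rightarrow> nat \<Rightarrow> int \<Rightarrow> (nat \<Rightarrow> int) \<Rightarrow> ereal" where
  "ps n m p v = (INF xs \<in> {xs. is_path n m v zerov xs \<and> is_wall n m p xs}.
                   ereal (real (length xs - 1)))"

definition Piv :: "nat \<Rightarrow> nat \<Rightarrow> (nat \<Rightarrow> int) \<Rightarrow> int set" where
  "Piv n m v = {p. -1 \<le> p \<and> p \<le> int m + 1 \<and> int n dvd (\<Sum>i\<in>{0..p}. v (nat i))}"

end

theory Submission
  imports Defs
begin


definition vert :: "nat \<Rightarrow> nat \<Rightarrow> (nat \<Rightarrow> int) \<Rightarrow> nat \<Rightarrow> int" where
"vert n m s j = (if j = 0 then s 0 mod int n else if j \<le> m then s j - s (j-1)
   else if j = m+1 then (- s m) mod int n else 0)"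

lemma cadd_mid: "1 \<le> j \<Longrightarrow> j \<le> m \<Longrightarrow> cadd n m j x = x"
  by (simp add: cadd_def)
lemma cadd_0: "cadd n m 0 x = x mod int n" by (simp add: cadd_def)
lemma cadd_end: "cadd n m (m+1) x = x mod int n" by (simp add: cadd_def)

lemma vert_partial:
  assumes "p \<le> m"
  shows "(\<Sum>j\<le>p. vert n m s j) = s 0 mod int n + s p - s 0"
  using assms
proof (induction p)
  case 0 then show ?case by (simp add: vert_def)
next
  case (Suc p) then show ?case by (simp add: vert_def)
qed

lemma vert_in_Zv:
  assumes "n > 1" and d: "\<forall>p\<in>{1..m}. \<bar>s p - s (p-1)\<bar> \<le> 1"
  shows "vert n m s \<in> Zv n m"
proof -
  have s: "(\<Sum>j\<le>m+1. vert n m s j) = s 0 mod int n + s m - s 0 + (- s m) mod int n"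
    using vert_partial[of m m n s] by (simp add: vert_def)
  have "int n dvd (s 0 mod int n - s 0)"
    by (metis dvd_minus_iff minus_diff_eq mod_0_imp_dvd mod_diff_left_eq diff_self mod_0)
  moreover have "int n dvd (s m + (- s m) mod int n)"
    by (metis add.commute mod_0_imp_dvd mod_add_left_eq add.right_inverse mod_0)
  ultimately have "int n dvd ((s 0 mod int n - s 0) + (s m + (- s m) mod int n))"
    by (rule dvd_add)
  then have "int n dvd (\<Sum>j\<le>m+1. vert n m s j)" unfolding s by (simp add: algebra_simps)
  moreover have "\<forall>i\<in>{1..m}. vert n m s i \<in> {-1,0,1}"
  proof
    fix i assume i: "i \<in> {1..m}"
    then have "\<bar>s i - s (i-1)\<bar> \<le> 1" using d by blast
    then show "vert n m s i \<in> {-1,0,1}" using i by (auto simp: vert_def)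
  qed
  ultimately show ?thesis using assms(1) by (auto simp: Zv_def vert_def)
qed

lemma vert_left:
  assumes "i \<le> m"
  shows "left_shift n m i (vert n m s) (vert n m (s(i := s i + 1)))"
  unfolding left_shift_def
proof (intro conjI allI impI)
  fix j assume "j \<noteq> i \<and> j \<noteq> i + 1"
  then show "vert n m (s(i := s i + 1)) j = vert n m s j"
    using assms by (auto simp: vert_def)
next
  show "vert n m (s(i := s i + 1)) i = cadd n m i (vert n m s i + 1)"
    using assms by (auto simp: vert_def cadd_def mod_add_left_eq)
next
  show "vert n m (s(i := s i + 1)) (i+1) = cadd n m (i+1) (vert n m s (i+1) - 1)"
    using assms by (auto simp: vert_def cadd_def mod_diff_left_eq diff_diff_eq)
qed (use assms in auto)

lemma vert_right:
  assumes "i \<le> m"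
  shows "right_shift n m i (vert n m s) (vert n m (s(i := s i - 1)))"
  unfolding right_shift_def
proof (intro conjI allI impI)
  fix j assume "j \<noteq> i \<and> j \<noteq> i + 1"
  then show "vert n m (s(i := s i - 1)) j = vert n m s j"
    using assms by (auto simp: vert_def)
next
  show "vert n m (s(i := s i - 1)) i = cadd n m i (vert n m s i - 1)"
    using assms by (auto simp: vert_def cadd_def mod_diff_left_eq)
next
  show "vert n m (s(i := s i - 1)) (i+1) = cadd n m (i+1) (vert n m s (i+1) + 1)"
    using assms by (auto simp: vert_def cadd_def mod_add_left_eq mod_add_right_eq algebra_simps)
qed (use assms in auto)

lemma allk_cons:
  assumes "xs \<noteq> []"
  shows "(\<forall>k<length (v#xs) - 1. P ((v#xs)!k) ((v#xs)!Suc k)) \<longleftrightarrow>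
         (P v (hd xs) \<and> (\<forall>k<length xs - 1. P (xs!k) (xs!Suc k)))"
proof
  assume h: "\<forall>k<length (v#xs) - 1. P ((v#xs)!k) ((v#xs)!Suc k)"
  have "P v (hd xs)" using h[rule_format, of 0] assms by (simp add: hd_conv_nth)
  moreover have "\<forall>k<length xs - 1. P (xs!k) (xs!Suc k)"
  proof (intro allI impI)
    fix k assume "k < length xs - 1"
    then show "P (xs!k) (xs!Suc k)" using h[rule_format, of "Suc k"] by simp
  qed
  ultimately show "P v (hd xs) \<and> (\<forall>k<length xs - 1. P (xs!k) (xs!Suc k))" ..
next
  assume h: "P v (hd xs) \<and> (\<forall>k<length xs - 1. P (xs!k) (xs!Suc k))"
  show "\<forall>k<length (v#xs) - 1. P ((v#xs)!k) ((v#xs)!Suc k)"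
  proof (intro allI impI)
    fix k assume k: "k < length (v#xs) - 1"
    show "P ((v#xs)!k) ((v#xs)!Suc k)"
    proof (cases k)
      case 0 then show ?thesis using h assms by (simp add: hd_conv_nth)
    next
      case (Suc k') then show ?thesis using h k by simp
    qed
  qed
qed

lemma path_cons:
  assumes "is_path n m w u xs" "adj n m v w"
  shows "is_path n m v u (v # xs)"
proof -
  have ne: "xs \<noteq> []" and hd: "hd xs = w" using assms(1) by (auto simp: is_path_def)
  have "v \<in> Zv n m" using assms(2) by (simp add: adj_def)
  then show ?thesis using assms ne hd unfolding is_path_def
    by (subst allk_cons[OF ne]) auto
qed

lemma wall_top_iff: "is_wall n m (int m + 1) ys = (\<forall>k<length ys - 1. \<not> right_shift n m m (ys!k) (ys!Suc k))"
  by (simp add: is_wall_def)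
lemma wall_bot_iff: "is_wall n m (-1) ys = (\<forall>k<length ys - 1. \<not> left_shift n m 0 (ys!k) (ys!Suc k))"
  by (simp add: is_wall_def)

lemma wall_cons_top:
  assumes "is_wall n m (int m + 1) xs" "xs \<noteq> []" "\<not> right_shift n m m v (hd xs)"
  shows "is_wall n m (int m + 1) (v # xs)"
  using assms unfolding wall_top_iff
  using allk_cons[OF assms(2), where P="\<lambda>a b. \<not> right_shift n m m a b" and v=v] by simp

lemma wall_cons_bot:
  assumes "is_wall n m (-1) xs" "xs \<noteq> []" "\<not> left_shift n m 0 v (hd xs)"
  shows "is_wall n m (-1) (v # xs)"
  using assms unfolding wall_bot_iff
  using allk_cons[OF assms(2), where P="\<lambda>a b. \<not> left_shift n m 0 a b" and v=v] by simp



lemma modsuc_ne: "x \<in> {0..<int n} \<Longrightarrow> n > 1 \<Longrightarrow> (x + 1) mod int n \<noteq> x"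
proof -
  assume x: "x \<in> {0..<int n}" and n: "n > 1"
  show ?thesis
  proof (cases "x + 1 < int n")
    case True then show ?thesis using x by simp
  next
    case False then have "x + 1 = int n" using x by simp
    then show ?thesis using n by simp
  qed
qed

lemma left_not_right:
  assumes "left_shift n m i u w" "u (m+1) \<in> {0..<int n}" "n > 1" "m \<ge> 1"
  shows "\<not> right_shift n m m u w"
proof
  assume r: "right_shift n m m u w"
  have i: "i \<le> m" using assms(1) by (simp add: left_shift_def)
  have wm: "w m = u m - 1" using r assms(4) by (simp add: right_shift_def cadd_mid)
  have wm1: "w (m+1) = (u (m+1) + 1) mod int n" using r by (simp add: right_shift_def cadd_def)
  show False
  proof (cases "i = m")
    case True
    then have "w m = u m + 1" using assms(1,4) by (simp add: left_shift_def cadd_mid)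
    then show False using wm by simp
  next
    case False
    then have "w (m+1) = u (m+1)" using assms(1) i by (simp add: left_shift_def)
    then show False using wm1 modsuc_ne[OF assms(2,3)] by simp
  qed
qed

lemma right_not_left:
  assumes "right_shift n m i u w" "u 0 \<in> {0..<int n}" "n > 1" "m \<ge> 1"
  shows "\<not> left_shift n m 0 u w"
proof
  assume l: "left_shift n m 0 u w"
  have w1: "w 1 = u 1 - 1" using l assms(4) by (simp add: left_shift_def cadd_mid)
  have w0: "w 0 = (u 0 + 1) mod int n" using l by (simp add: left_shift_def cadd_0)
  show False
  proof (cases "i = 0")
    case True
    then have "w 1 = u 1 + 1" using assms(1,4) by (simp add: right_shift_def cadd_mid)
    then show False using w1 by simp
  next
    case False
    then have "w 0 = u 0" using assms(1) by (simp add: right_shift_def)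
    then show False using w0 modsuc_ne[OF assms(2,3)] by simp
  qed
qed

lemma zerov_Zv: "n > 1 \<Longrightarrow> zerov \<in> Zv n m"
  by (simp add: Zv_def zerov_def)

lemma sum_upd_int:
  fixes s :: "nat \<Rightarrow> 'b" and g :: "'b \<Rightarrow> 'c::ab_group_add" and m :: nat
  assumes "i \<le> m"
  shows "(\<Sum>p\<le>m. g ((s(i := x)) p)) = (\<Sum>p\<le>m. g (s p)) - g (s i) + g x"
proof -
  have iA: "i \<in> {..m}" using assms by simp
  have "(\<Sum>p\<le>m. g ((s(i := x)) p)) = g ((s(i := x)) i) + (\<Sum>p\<in>{..m}-{i}. g ((s(i := x)) p))"
    by (rule sum.remove) (use iA in auto)
  also have "(\<Sum>p\<in>{..m}-{i}. g ((s(i := x)) p)) = (\<Sum>p\<in>{..m}-{i}. g (s p))"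
    by (rule sum.cong) auto
  also have "\<dots> = (\<Sum>p\<le>m. g (s p)) - g (s i)"
    using iA by (simp add: sum_diff1)
  finally show ?thesis by simp
qed

lemma constr1:
  assumes n: "n > 1" and m: "m \<ge> 1"
  shows "(\<forall>p\<le>m. 1 \<le> s p \<and> s p \<le> int n) \<Longrightarrow> (\<forall>p\<in>{1..m}. \<bar>s p - s (p-1)\<bar> \<le> 1)
    \<Longrightarrow> (\<Sum>p\<le>m. int n - s p) = int d
    \<Longrightarrow> \<exists>xs. is_path n m (vert n m s) zerov xs \<and> is_wall n m (int m + 1) xs \<and> length xs = Suc d"
proof (induction d arbitrary: s)
  case 0
  have "\<forall>p\<in>{..m}. int n - s p = 0"
    using 0 by (subst sum_nonneg_eq_0_iff[symmetric]) auto
  then have sn: "\<forall>p\<le>m. s p = int n" by auto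
  have "vert n m s = zerov"
  proof
    fix j show "vert n m s j = zerov j"
      using sn m by (cases "j = 0"; cases "j \<le> m"; auto simp: vert_def zerov_def)
  qed
  then show ?case using zerov_Zv[OF n]
    by (intro exI[of _ "[zerov]"]) (simp add: is_path_def is_wall_def)
next
  case (Suc d)
  define mn where "mn = Min (s ` {..m})"
  have "mn \<in> s ` {..m}" unfolding mn_def by (rule Min_in) auto
  then obtain i where i: "i \<le> m" "s i = mn" by auto
  have imin: "\<forall>p\<le>m. s i \<le> s p" using i unfolding mn_def by auto
  have "\<exists>p\<le>m. s p < int n"
  proof (rule ccontr)
    assume "\<not> ?thesis"
    then have "\<forall>p\<le>m. s p = int n" using Suc.prems(1) by force
    then have "(\<Sum>p\<le>m. int n - s p) = 0" by simp
    then show False using Suc.prems(3) by simp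
  qed
  then have ilt: "s i < int n" using imin by force
  define s' where "s' = s(i := s i + 1)"
  have p1: "\<forall>p\<le>m. 1 \<le> s' p \<and> s' p \<le> int n" using Suc.prems(1) ilt i(1) by (force simp: s'_def)
  have p2: "\<forall>p\<in>{1..m}. \<bar>s' p - s' (p-1)\<bar> \<le> 1"
  proof
    fix p assume p: "p \<in> {1..m}"
    have d: "\<bar>s p - s (p-1)\<bar> \<le> 1" using Suc.prems(2) p by blast
    have "s i \<le> s p" "s i \<le> s (p-1)" using imin p by auto
    then show "\<bar>s' p - s' (p-1)\<bar> \<le> 1" using d p by (auto simp: s'_def)
  qed
  have p3: "(\<Sum>p\<le>m. int n - s' p) = int d"
    using sum_upd_int[OF i(1), of "\<lambda>x. int n - x" s "s i + 1"] Suc.prems(3)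
    by (simp add: s'_def)
  obtain xs where xs: "is_path n m (vert n m s') zerov xs" "is_wall n m (int m + 1) xs" "length xs = Suc d"
    using Suc.IH[OF p1 p2 p3] by blast
  have ne: "xs \<noteq> []" and hd: "hd xs = vert n m s'" using xs(1) by (auto simp: is_path_def)
  have ls: "left_shift n m i (vert n m s) (vert n m s')" unfolding s'_def by (rule vert_left[OF i(1)])
  have Zs: "vert n m s \<in> Zv n m" by (rule vert_in_Zv[OF n Suc.prems(2)])
  have Zs': "vert n m s' \<in> Zv n m" by (rule vert_in_Zv[OF n p2])
  have adj: "adj n m (vert n m s) (vert n m s')"
    unfolding adj_def using Zs Zs' ls i(1) by blast
  have nr: "\<not> right_shift n m m (vert n m s) (hd xs)"
    unfolding hd by (rule left_not_right[OF ls _ n m]) (use Zs in \<open>simp add: Zv_def\<close>)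
  show ?case
    using path_cons[OF xs(1) adj] wall_cons_top[OF xs(2) ne nr] xs(3) by auto
qed

lemma constr2:
  assumes n: "n > 1" and m: "m \<ge> 1"
  shows "(\<forall>p\<le>m. 0 \<le> s p \<and> s p < int n) \<Longrightarrow> (\<forall>p\<in>{1..m}. \<bar>s p - s (p-1)\<bar> \<le> 1)
    \<Longrightarrow> (\<Sum>p\<le>m. s p) = int d
    \<Longrightarrow> \<exists>xs. is_path n m (vert n m s) zerov xs \<and> is_wall n m (-1) xs \<and> length xs = Suc d"
proof (induction d arbitrary: s)
  case 0
  have "\<forall>p\<in>{..m}. s p = 0"
    using 0 by (subst sum_nonneg_eq_0_iff[symmetric]) auto
  then have sn: "\<forall>p\<le>m. s p = 0" by auto
  have "vert n m s = zerov"
  proof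
    fix j show "vert n m s j = zerov j"
      using sn m by (cases "j = 0"; cases "j \<le> m"; auto simp: vert_def zerov_def)
  qed
  then show ?case using zerov_Zv[OF n]
    by (intro exI[of _ "[zerov]"]) (simp add: is_path_def is_wall_def)
next
  case (Suc d)
  define mx where "mx = Max (s ` {..m})"
  have "mx \<in> s ` {..m}" unfolding mx_def by (rule Max_in) auto
  then obtain i where i: "i \<le> m" "s i = mx" by auto
  have imax: "\<forall>p\<le>m. s p \<le> s i" using i unfolding mx_def by auto
  have "\<exists>p\<le>m. s p > 0"
  proof (rule ccontr)
    assume "\<not> ?thesis"
    then have "\<forall>p\<le>m. s p = 0" using Suc.prems(1) by force
    then have "(\<Sum>p\<le>m. s p) = 0" by simp
    then show False using Suc.prems(3) by simp
  qed
  then have igt: "s i > 0" using imax by force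
  define s' where "s' = s(i := s i - 1)"
  have p1: "\<forall>p\<le>m. 0 \<le> s' p \<and> s' p < int n" using Suc.prems(1) igt i(1) by (force simp: s'_def)
  have p2: "\<forall>p\<in>{1..m}. \<bar>s' p - s' (p-1)\<bar> \<le> 1"
  proof
    fix p assume p: "p \<in> {1..m}"
    have d: "\<bar>s p - s (p-1)\<bar> \<le> 1" using Suc.prems(2) p by blast
    have "s p \<le> s i" "s (p-1) \<le> s i" using imax p by auto
    then show "\<bar>s' p - s' (p-1)\<bar> \<le> 1" using d p by (auto simp: s'_def)
  qed
  have p3: "(\<Sum>p\<le>m. s' p) = int d"
    using sum_upd_int[OF i(1), of "\<lambda>x. x" s "s i - 1"] Suc.prems(3)
    by (simp add: s'_def)
  obtain xs where xs: "is_path n m (vert n m s') zerov xs" "is_wall n m (-1) xs" "length xs = Suc d"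
    using Suc.IH[OF p1 p2 p3] by blast
  have ne: "xs \<noteq> []" and hd: "hd xs = vert n m s'" using xs(1) by (auto simp: is_path_def)
  have rs: "right_shift n m i (vert n m s) (vert n m s')" unfolding s'_def by (rule vert_right[OF i(1)])
  have Zs: "vert n m s \<in> Zv n m" by (rule vert_in_Zv[OF n Suc.prems(2)])
  have Zs': "vert n m s' \<in> Zv n m" by (rule vert_in_Zv[OF n p2])
  have adj: "adj n m (vert n m s) (vert n m s')"
    unfolding adj_def using Zs Zs' rs i(1) by blast
  have nl: "\<not> left_shift n m 0 (vert n m s) (hd xs)"
    unfolding hd by (rule right_not_left[OF rs _ n m]) (use Zs in \<open>simp add: Zv_def\<close>)
  show ?case
    using path_cons[OF xs(1) adj] wall_cons_bot[OF xs(2) ne nl] xs(3) by auto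
qed



lemma pot_diff:
  fixes c :: "nat \<Rightarrow> int"
  assumes "i \<le> m" "\<forall>j. j \<noteq> i \<and> j \<noteq> i+1 \<longrightarrow> w j = u j"
  shows "(\<Sum>j\<le>m+1. c j * w j) = (\<Sum>j\<le>m+1. c j * u j) + c i * (w i - u i) + c (i+1) * (w (i+1) - u (i+1))"
proof -
  have "(\<Sum>j\<le>m+1. c j * w j) - (\<Sum>j\<le>m+1. c j * u j) = (\<Sum>j\<le>m+1. c j * (w j - u j))"
    by (simp add: sum_subtractf right_diff_distrib)
  also have "\<dots> = (\<Sum>j\<in>{i, i+1}. c j * (w j - u j))"
    by (rule sum.mono_neutral_left[symmetric]) (use assms in auto)
  also have "\<dots> = c i * (w i - u i) + c (i+1) * (w (i+1) - u (i+1))" by simp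
  finally show ?thesis by simp
qed

lemma mod_m1: "0 \<le> x \<Longrightarrow> x < int n \<Longrightarrow> (x - 1) mod int n \<ge> x - 1"
proof (cases "x = 0")
  case True
  assume "0 \<le> x" "x < int n"
  then have "int n > 0" by simp
  then have "(x - 1) mod int n \<ge> 0" by simp
  then show ?thesis using True by simp
qed auto

lemma step1:
  assumes m: "m \<ge> 1" and uZ: "u \<in> Zv n m" and i: "i \<le> m"
    and sh: "left_shift n m i u w \<or> right_shift n m i u w" and nr: "\<not> right_shift n m m u w"
  shows "(\<Sum>j\<le>m+1. int j * w j) \<ge> (\<Sum>j\<le>m+1. int j * u j) - 1"
proof -
  have eq: "\<forall>j. j \<noteq> i \<and> j \<noteq> i+1 \<longrightarrow> w j = u j" using sh by (auto simp: left_shift_def right_shift_def)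
  note D = pot_diff[OF i eq, of int]
  have um1: "u (m+1) \<in> {0..<int n}" using uZ by (simp add: Zv_def)
  have "int i * (w i - u i) + int (i+1) * (w (i+1) - u (i+1)) \<ge> -1"
  proof (cases "left_shift n m i u w")
    case L: True
    have a: "w (i+1) - u (i+1) \<ge> -1"
    proof (cases "i = m")
      case True
      then have "w (m+1) = (u (m+1) - 1) mod int n" using L by (simp add: left_shift_def cadd_def)
      then show ?thesis using um1 True mod_m1[of "u (m+1)" n] by simp
    next
      case False
      then have "w (i+1) = u (i+1) - 1" using L i by (simp add: left_shift_def cadd_def)
      then show ?thesis by simp
    qed
    show ?thesis
    proof (cases "i = 0")
      case True then show ?thesis using a by simp
    next
      case False
      then have wi: "w i = u i + 1" using L i by (simp add: left_shift_def cadd_def)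
      have "int (i+1) * (w (i+1) - u (i+1)) \<ge> int (i+1) * (-1)"
        by (rule mult_left_mono) (use a in auto)
      then show ?thesis using wi by simp
    qed
  next
    case False
    then have R: "right_shift n m i u w" using sh by simp
    then have im: "i \<noteq> m" using nr by auto
    then have w1: "w (i+1) = u (i+1) + 1" using R i by (simp add: right_shift_def cadd_def)
    show ?thesis
    proof (cases "i = 0")
      case True then show ?thesis using w1 by simp
    next
      case False
      then have "w i = u i - 1" using R i by (simp add: right_shift_def cadd_def)
      then have "int i * (w i - u i) = - int i" by simp
      moreover have "int (i+1) * (w (i+1) - u (i+1)) = int i + 1" using w1 by simp
      ultimately show ?thesis by simp
    qed
  qed
  then show ?thesis using D by linarith
qed

lemma step2:
  assumes m: "m \<ge> 1" and uZ: "u \<in> Zv n m" and i: "i \<le> m"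
    and sh: "left_shift n m i u w \<or> right_shift n m i u w" and nl: "\<not> left_shift n m 0 u w"
  shows "(\<Sum>j\<le>m+1. (int m + 1 - int j) * w j) \<ge> (\<Sum>j\<le>m+1. (int m + 1 - int j) * u j) - 1"
proof -
  have eq: "\<forall>j. j \<noteq> i \<and> j \<noteq> i+1 \<longrightarrow> w j = u j" using sh by (auto simp: left_shift_def right_shift_def)
  note D = pot_diff[OF i eq, of "\<lambda>j. int m + 1 - int j"]
  have u0: "u 0 \<in> {0..<int n}" using uZ by (simp add: Zv_def)
  have ci: "int m + 1 - int i \<ge> 1" using i by simp
  have "(int m + 1 - int i) * (w i - u i) + (int m + 1 - int (i+1)) * (w (i+1) - u (i+1)) \<ge> -1"
  proof (cases "left_shift n m i u w")
    case L: True
    have i0: "i \<noteq> 0"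
    proof
      assume "i = 0" with L nl show False by simp
    qed
    then have wi: "w i = u i + 1" using L i by (simp add: left_shift_def cadd_def)
    show ?thesis
    proof (cases "i = m")
      case True then show ?thesis using wi by simp
    next
      case False
      then have "w (i+1) = u (i+1) - 1" using L i by (simp add: left_shift_def cadd_def)
      then have "(int m + 1 - int (i+1)) * (w (i+1) - u (i+1)) = - (int m - int i)" by simp
      moreover have "w i - u i = 1" using wi by simp
      ultimately show ?thesis by simp
    qed
  next
    case False
    then have R: "right_shift n m i u w" using sh by simp
    have a: "w i - u i \<ge> -1"
    proof (cases "i = 0")
      case True
      then have "w 0 = (u 0 - 1) mod int n" using R by (simp add: right_shift_def cadd_def)
      then show ?thesis using u0 True mod_m1[of "u 0" n] by simp
    next
      case False
      then have "w i = u i - 1" using R i by (simp add: right_shift_def cadd_def)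
      then show ?thesis by simp
    qed
    have b: "(int m + 1 - int (i+1)) * (w (i+1) - u (i+1)) = int m + 1 - int (i+1)"
    proof (cases "i = m")
      case True then show ?thesis by simp
    next
      case False
      then have "w (i+1) = u (i+1) + 1" using R i by (simp add: right_shift_def cadd_def)
      then show ?thesis by simp
    qed
    have "(int m + 1 - int i) * (w i - u i) \<ge> (int m + 1 - int i) * (-1)"
      by (rule mult_left_mono) (use a ci in auto)
    moreover have "(int m + 1 - int i) * (-1) = -(int m + 1 - int i)" by simp
    moreover have "int (i+1) = int i + 1" by simp
    ultimately show ?thesis using b by linarith
  qed
  then show ?thesis using D by linarith
qed

lemma path_pot:
  assumes "\<forall>k < length xs - 1. f (xs ! Suc k) \<ge> f (xs ! k) - (1::int)"
  shows "k < length xs \<Longrightarrow> f (xs!0) - f (xs!k) \<le> int k"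
proof (induction k)
  case 0 then show ?case by simp
next
  case (Suc k)
  then have "f (xs ! Suc k) \<ge> f (xs ! k) - 1" using assms by simp
  then show ?case using Suc by simp
qed

lemma lower_gen:
  assumes p: "is_path n m v zerov xs"
    and step: "\<And>u w. u \<in> Zv n m \<Longrightarrow> adj n m u w \<Longrightarrow> Q u w \<Longrightarrow> f w \<ge> f u - (1::int)"
    and q: "\<forall>k<length xs - 1. Q (xs!k) (xs!Suc k)" and z: "f zerov = 0"
  shows "f v \<le> int (length xs - 1)"
proof -
  have ne: "xs \<noteq> []" using p by (simp add: is_path_def)
  have "\<forall>k < length xs - 1. f (xs ! Suc k) \<ge> f (xs ! k) - 1"
  proof (intro allI impI)
    fix k assume k: "k < length xs - 1"
    have a: "adj n m (xs!k) (xs!Suc k)" using p k by (simp add: is_path_def)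
    then have "xs!k \<in> Zv n m" by (simp add: adj_def)
    then show "f (xs ! Suc k) \<ge> f (xs ! k) - 1" using step a q k by blast
  qed
  from path_pot[OF this, of "length xs - 1"] ne
  have "f (xs!0) - f (xs!(length xs - 1)) \<le> int (length xs - 1)" by simp
  moreover have "xs!0 = v" "xs!(length xs - 1) = zerov"
    using p ne by (auto simp: is_path_def hd_conv_nth last_conv_nth)
  ultimately show ?thesis using z by simp
qed

lemma idA: "(\<Sum>i\<le>Suc k. int i * f i) + (\<Sum>p\<le>k. (\<Sum>i\<le>p. f i)) = int (Suc k) * (\<Sum>i\<le>Suc k. (f i :: int))"
  by (induction k) (simp_all add: algebra_simps)

lemma idB: "(\<Sum>p\<le>k. (\<Sum>i\<le>p. f i)) = (\<Sum>i\<le>k. (int k + 1 - int i) * (f i :: int))"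
proof (induction k)
  case 0 then show ?case by simp
next
  case (Suc k)
  have "(\<Sum>i\<le>k. (int (Suc k) + 1 - int i) * f i) = (\<Sum>i\<le>k. (int k + 1 - int i) * f i) + (\<Sum>i\<le>k. f i)"
    unfolding sum.distrib[symmetric] by (rule sum.cong) (auto simp: algebra_simps)
  then show ?case using Suc by simp
qed

lemma sum_int_nat: "(\<Sum>i\<in>{0..int p}. v (nat i)) = (\<Sum>i\<le>p. v i)"
proof -
  have "{0..int p} = int ` {..p}"
    by (auto simp: image_iff intro!: bexI[of _ "nat x" for x])
  then show ?thesis by (simp add: sum.reindex)
qed

lemma dvd_eq: "int n dvd T \<Longrightarrow> 0 < T \<Longrightarrow> T < 2 * int n \<Longrightarrow> T = int n"
proof -
  assume h: "int n dvd T" "0 < T" "T < 2 * int n"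
  then obtain k where k: "T = int n * k" by (auto elim: dvdE)
  have n: "int n > 0" using h by simp
  have "k > 0" using h(2) n k zero_less_mult_pos by blast
  moreover have "int n * k < int n * 2" using h(3) k by (simp add: mult.commute)
  then have "k < 2" using n by simp
  ultimately have "k = 1" by simp
  then show ?thesis using k by simp
qed

lemma mod_neg_eq: "int n dvd (a + b) \<Longrightarrow> 0 \<le> b \<Longrightarrow> b < int n \<Longrightarrow> (- a) mod int n = b"
proof -
  assume h: "int n dvd (a + b)" "0 \<le> b" "b < int n"
  have "(- a) mod int n = (b - (a + b)) mod int n" by simp
  also have "\<dots> = (b - (a+b) mod int n) mod int n" by (simp add: mod_diff_right_eq)
  also have "\<dots> = b" using h by simp
  finally show ?thesis .
qed



theorem lemma5p15:
  fixes n m :: nat and v :: "nat \<Rightarrow> int"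
  assumes "n > 1" and "m \<ge> 1" and "v \<in> Zv n m"
    and "Piv n m v = {-1, int m + 1}"
  shows "ps n m (int m + 1) v = ereal (of_int (\<Sum>i\<le>m+1. int i * v i))
    \<and> ps n m (-1) v = ereal (of_int (\<Sum>i\<le>m+1. (int m + 1 - int i) * v i))
    \<and> gdist n m v zerov \<le> enat (n * (m + 1) div 2)"
proof -
  note n = assms(1) and m = assms(2) and vZ = assms(3)
  define S where "S = (\<lambda>p. \<Sum>i\<le>p. v i)"
  have v0: "v 0 \<in> {0..<int n}" and vm1: "v (m+1) \<in> {0..<int n}"
    and vint: "\<forall>i\<in>{1..m}. v i \<in> {-1,0,1}" and vout: "\<forall>i>m+1. v i = 0"
    and vdvd: "int n dvd (\<Sum>i\<le>m+1. v i)"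
    using vZ by (auto simp: Zv_def)
  have ndvd: "\<not> int n dvd S p" if p: "p \<le> m" for p
  proof
    assume d: "int n dvd S p"
    have "int p \<in> Piv n m v" using d p unfolding Piv_def S_def by (simp add: sum_int_nat)
    then show False using assms(4) p by auto
  qed
  have Sr: "1 \<le> S p \<and> S p \<le> int n - 1" if "p \<le> m" for p
    using that
  proof (induction p)
    case 0
    have "S 0 = v 0" by (simp add: S_def)
    moreover have "S 0 \<noteq> 0" using ndvd[of 0] by auto
    ultimately show ?case using v0 by auto
  next
    case (Suc p)
    have IH: "1 \<le> S p \<and> S p \<le> int n - 1" using Suc by simp
    have "v (Suc p) \<in> {-1,0,1}" using vint Suc.prems by auto
    moreover have eq: "S (Suc p) = S p + v (Suc p)" by (simp add: S_def)
    ultimately have "0 \<le> S (Suc p) \<and> S (Suc p) \<le> int n" using IH by auto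
    moreover have "S (Suc p) \<noteq> 0" "S (Suc p) \<noteq> int n" using ndvd[OF Suc.prems] by auto
    ultimately show ?case by auto
  qed
  have Sd: "\<forall>p\<in>{1..m}. \<bar>S p - S (p-1)\<bar> \<le> 1"
  proof
    fix p assume p: "p \<in> {1..m}"
    then have "S p = S (p-1) + v p" unfolding S_def by (cases p) auto
    moreover have "v p \<in> {-1,0,1}" using vint p by auto
    ultimately show "\<bar>S p - S (p-1)\<bar> \<le> 1" by auto
  qed
  have tot_eq: "(\<Sum>i\<le>m+1. v i) = S m + v (m+1)" by (simp add: S_def)
  have tot: "(\<Sum>i\<le>m+1. v i) = int n"
    using dvd_eq[OF vdvd] tot_eq Sr[of m] vm1 by simp
  have vert_v: "vert n m S = v"
  proof
    fix j
    show "vert n m S j = v j"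
    proof (cases "j = 0")
      case True then show ?thesis using v0 by (simp add: vert_def S_def)
    next
      case j0: False
      show ?thesis
      proof (cases "j \<le> m")
        case True
        then have "S j = S (j-1) + v j" unfolding S_def using j0 by (cases j) auto
        then show ?thesis using True j0 by (simp add: vert_def)
      next
        case False
        show ?thesis
        proof (cases "j = m+1")
          case True
          have "(- S m) mod int n = v (m+1)"
            by (rule mod_neg_eq) (use vdvd tot_eq vm1 in auto)
          then show ?thesis using True by (simp add: vert_def)
        next
          case False
          then show ?thesis using \<open>\<not> j \<le> m\<close> j0 vout by (simp add: vert_def)
        qed
      qed
    qed
  qed
  have sumS1: "(\<Sum>i\<le>m+1. int i * v i) = int (Suc m) * int n - (\<Sum>p\<le>m. S p)"
    using idA[where k=m and f=v] tot unfolding S_def by simp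
  have sumS2: "(\<Sum>i\<le>m+1. (int m + 1 - int i) * v i) = (\<Sum>p\<le>m. S p)"
    using idB[where k=m and f=v] unfolding S_def by simp
  have D1eq: "(\<Sum>p\<le>m. int n - S p) = int (Suc m) * int n - (\<Sum>p\<le>m. S p)"
    by (simp add: sum_subtractf)
  define d1 where "d1 = nat (\<Sum>p\<le>m. int n - S p)"
  define d2 where "d2 = nat (\<Sum>p\<le>m. S p)"
  have nn1: "(\<Sum>p\<le>m. int n - S p) \<ge> 0" using Sr by (intro sum_nonneg) force
  have nn2: "(\<Sum>p\<le>m. S p) \<ge> 0" using Sr by (intro sum_nonneg) force
  have d1i: "(\<Sum>p\<le>m. int n - S p) = int d1" using nn1 by (simp add: d1_def)
  have d2i: "(\<Sum>p\<le>m. S p) = int d2" using nn2 by (simp add: d2_def)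
  have d12: "d1 + d2 = n * (m+1)"
  proof -
    have "int d1 + int d2 = int (Suc m) * int n" using d1i d2i D1eq by simp
    then show ?thesis by (simp only: of_nat_add[symmetric] of_nat_mult[symmetric] of_nat_eq_iff) simp
  qed
  obtain xs1 where xs1: "is_path n m v zerov xs1" "is_wall n m (int m + 1) xs1" "length xs1 = Suc d1"
  proof -
    have c1: "\<forall>p\<le>m. 1 \<le> S p \<and> S p \<le> int n" using Sr by force
    show ?thesis using constr1[OF n m c1 Sd d1i] that unfolding vert_v by blast
  qed
  obtain xs2 where xs2: "is_path n m v zerov xs2" "is_wall n m (-1) xs2" "length xs2 = Suc d2"
  proof -
    have c2: "\<forall>p\<le>m. 0 \<le> S p \<and> S p < int n" using Sr by force
    show ?thesis using constr2[OF n m c2 Sd d2i] that unfolding vert_v by blast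
  qed
  have L1: "(\<Sum>i\<le>m+1. int i * v i) = int d1" using sumS1 D1eq d1i by simp
  have L2: "(\<Sum>i\<le>m+1. (int m + 1 - int i) * v i) = int d2" using sumS2 d2i by simp
  have lb1: "int d1 \<le> int (length xs - 1)"
    if "is_path n m v zerov xs" "is_wall n m (int m + 1) xs" for xs
  proof -
    have "(\<Sum>i\<le>m+1. int i * v i) \<le> int (length xs - 1)"
    proof (rule lower_gen[OF that(1), where Q="\<lambda>a b. \<not> right_shift n m m a b"])
      fix u w assume "u \<in> Zv n m" "adj n m u w" "\<not> right_shift n m m u w"
      then show "(\<Sum>i\<le>m+1. int i * u i) - 1 \<le> (\<Sum>i\<le>m+1. int i * w i)"
        using step1[OF m] unfolding adj_def by blast
    next
      show "\<forall>k<length xs - 1. \<not> right_shift n m m (xs ! k) (xs ! Suc k)"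
        using that(2) by (simp add: wall_top_iff)
    qed (simp add: zerov_def)
    then show ?thesis using L1 by simp
  qed
  have lb2: "int d2 \<le> int (length xs - 1)"
    if "is_path n m v zerov xs" "is_wall n m (-1) xs" for xs
  proof -
    have "(\<Sum>i\<le>m+1. (int m + 1 - int i) * v i) \<le> int (length xs - 1)"
    proof (rule lower_gen[OF that(1), where Q="\<lambda>a b. \<not> left_shift n m 0 a b"])
      fix u w assume "u \<in> Zv n m" "adj n m u w" "\<not> left_shift n m 0 u w"
      then show "(\<Sum>i\<le>m+1. (int m + 1 - int i) * u i) - 1 \<le> (\<Sum>i\<le>m+1. (int m + 1 - int i) * w i)"
        using step2[OF m] unfolding adj_def by blast
    next
      show "\<forall>k<length xs - 1. \<not> left_shift n m 0 (xs ! k) (xs ! Suc k)"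
        using that(2) by (simp add: wall_bot_iff)
    qed (simp add: zerov_def)
    then show ?thesis using L2 by simp
  qed
  have P1: "ps n m (int m + 1) v = ereal (real d1)"
    unfolding ps_def
  proof (rule antisym)
    show "(INF xs\<in>{xs. is_path n m v zerov xs \<and> is_wall n m (int m + 1) xs}. ereal (real (length xs - 1))) \<le> ereal (real d1)"
      by (rule INF_lower2[of xs1]) (use xs1 in auto)
    show "ereal (real d1) \<le> (INF xs\<in>{xs. is_path n m v zerov xs \<and> is_wall n m (int m + 1) xs}. ereal (real (length xs - 1)))"
      by (rule INF_greatest) (use lb1 in auto)
  qed
  have P2: "ps n m (-1) v = ereal (real d2)"
    unfolding ps_def
  proof (rule antisym)
    show "(INF xs\<in>{xs. is_path n m v zerov xs \<and> is_wall n m (-1) xs}. ereal (real (length xs - 1))) \<le> ereal (real d2)"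
      by (rule INF_lower2[of xs2]) (use xs2 in auto)
    show "ereal (real d2) \<le> (INF xs\<in>{xs. is_path n m v zerov xs \<and> is_wall n m (-1) xs}. ereal (real (length xs - 1)))"
      by (rule INF_greatest) (use lb2 in auto)
  qed
  have G1: "gdist n m v zerov \<le> enat d1"
    unfolding gdist_def by (rule INF_lower2[of xs1]) (use xs1 in auto)
  have G2: "gdist n m v zerov \<le> enat d2"
    unfolding gdist_def by (rule INF_lower2[of xs2]) (use xs2 in auto)
  have "min d1 d2 \<le> n * (m + 1) div 2" using d12 by auto
  then have G: "gdist n m v zerov \<le> enat (n * (m + 1) div 2)"
    using G1 G2 by (cases "d1 \<le> d2") (auto intro: order_trans)
  show ?thesis using P1 P2 G L1 L2 by simp
qed

end
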